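(* Let $\Sigma$ be an alphabet with $|\Sigma|\ge 3$. A function $f\colon\Sigma^*\to\Sigma^*$ is congruence preserving if and only if there exist $n\in\mathbb{N}$ and words $w_0,\ldots,w_n\in\Sigma^*$ such that $f(x)=w_0xw_1x\cdots w_{n-1}xw_n$ for all $x\in\Sigma^*$.
   Context: $\Sigma^*$ denotes the free monoid over $\Sigma$: finite words over $\Sigma$ with concatenation, unit the empty word $\varepsilon$. A congruence on $\Sigma^*$ is an equivalence relation $\sim$ such that $u\sim v$ and $u'\sim v'$ imply $uu'\sim vv'$. A function $f\colon(\Sigma^* )^k\to\Sigma^*$ is congruence preserving (CP) if for every congruence $\sim$ on $\Sigma^*$ and all $u_1,\ldots,u_k,v_1,\ldots,v_k\in\Sigma^*$ with $u_i\sim v_i$ for $i=1,\ldots,k$, we have $f(u_1,\ldots,u_k)\sim f(v_1,\ldots,v_k)$. *)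

theory Defs
  imports Main "HOL-Library.Cardinality"
begin

definition congruence :: "('a list \<Rightarrow> 'a list \<Rightarrow> bool) \<Rightarrow> bool" where
  "congruence R \<longleftrightarrow> equivp R \<and>
     (\<forall>u v u' v'. R u v \<longrightarrow> R u' v' \<longrightarrow> R (u @ u') (v @ v'))"

definition congruence_preserving :: "('a list \<Rightarrow> 'a list) \<Rightarrow> bool" where
  "congruence_preserving f \<longleftrightarrow>
     (\<forall>R. congruence R \<longrightarrow> (\<forall>u v. R u v \<longrightarrow> R (f u) (f v)))"

fun interleave :: "'a list list \<Rightarrow> 'a list \<Rightarrow> 'a list" where
  "interleave [] x = []"
| "interleave [w] x = w"
| "interleave (w # ws) x = w @ x @ interleave ws x"

end

theory Submission
  imports Defs
begin

definition sub :: "'a \<Rightarrow> 'a list \<Rightarrow> 'a list \<Rightarrow> 'a list" where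
  "sub s w X = concat (map (\<lambda>c. if c = s then w else [c]) X)"

lemma sub_Nil[simp]: "sub s w [] = []" by (simp add: sub_def)
lemma sub_Cons[simp]: "sub s w (c # X) = (if c = s then w else [c]) @ sub s w X"
  by (simp add: sub_def)
lemma sub_append[simp]: "sub s w (X @ Y) = sub s w X @ sub s w Y"
  by (simp add: sub_def)
lemma sub_id: "s \<notin> set X \<Longrightarrow> sub s w X = X"
  by (induction X) auto
lemma set_sub_Nil: "set (sub p [] X) = set X - {p}"
  by (induction X) auto
lemma sub_idem: "sub p [] (sub p [] X) = sub p [] X"
  by (rule sub_id) (simp add: set_sub_Nil)
lemma length_sub_less: "p \<in> set X \<Longrightarrow> length (sub p [] X) < length X"
proof (induction X)
  case (Cons c X)
  have "length (sub p [] X) \<le> length X" by (induction X) auto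
  then show ?case using Cons by auto
qed simp
lemma sub_single: "sub s [t] X = map (\<lambda>x. if x = s then t else x) X"
  by (induction X) auto

lemma sub_interleave:
  "sub s w (interleave ws x) = interleave (map (sub s w) ws) (sub s w x)"
  by (induction ws x rule: interleave.induct) auto

lemma kernel:
  assumes "congruence_preserving f" "sub s w u = sub s w v"
  shows "sub s w (f u) = sub s w (f v)"
proof -
  let ?R = "\<lambda>u v. sub s w u = sub s w v"
  have "congruence ?R"
    unfolding congruence_def
    by (auto intro!: equivpI simp: reflp_def symp_def transp_def)
  then show ?thesis using assms unfolding congruence_preserving_def by blast
qed

lemma transfer:
  assumes "congruence_preserving f" "f u = interleave ws u" "sub s w u = sub s w x"
  shows "sub s w (f x) = sub s w (interleave ws x)"
proof -
  have "sub s w (f x) = sub s w (f u)" using kernel[OF assms(1)] assms(3) by metis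
  also have "\<dots> = interleave (map (sub s w) ws) (sub s w u)" using assms(2) sub_interleave by metis
  also have "\<dots> = sub s w (interleave ws x)" using assms(3) sub_interleave by metis
  finally show ?thesis .
qed

lemma detG:
  assumes "p \<noteq> q" "r \<noteq> p" "r \<noteq> q"
  shows "sub p [] X = sub p [] Y \<Longrightarrow> sub q [] X = sub q [] Y \<Longrightarrow> sub r w X = sub r w Y \<Longrightarrow> X = Y"
proof (induction X arbitrary: Y)
  case Nil
  then show ?case using assms by (cases Y) (auto split: if_splits)
next
  case (Cons s X)
  show ?case
  proof (cases Y)
    case Nil
    then show ?thesis using Cons.prems assms by (auto split: if_splits)
  next
    case (Cons t Y')
    show ?thesis
    proof (cases "s = t")
      case True
      then show ?thesis using Cons.prems Cons.IH[of Y'] \<open>Y = t # Y'\<close> by auto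
    next
      case False
      then show ?thesis using Cons.prems \<open>Y = t # Y'\<close> assms by (auto split: if_splits)
    qed
  qed
qed

lemma detH:
  assumes "q \<noteq> r" "x \<noteq> []" "q \<notin> set x" "r \<notin> set x"
  shows "sub q x X = sub q x Y \<Longrightarrow> sub r x X = sub r x Y \<Longrightarrow> X = Y"
proof (induction X arbitrary: Y)
  case Nil
  then show ?case using assms by (cases Y) (auto split: if_splits)
next
  case (Cons s X)
  show ?case
  proof (cases Y)
    case Nil
    then show ?thesis using Cons.prems assms by (auto split: if_splits)
  next
    case (Cons t Y')
    show ?thesis
    proof (cases "s = t")
      case True
      then show ?thesis using Cons.prems Cons.IH[of Y'] \<open>Y = t # Y'\<close> by auto
    next
      case False
      obtain h x' where x: "x = h # x'" using assms(2) by (cases x) auto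
      show ?thesis using False Cons.prems \<open>Y = t # Y'\<close> assms x by (auto split: if_splits)
    qed
  qed
qed

lemma interleave_cons_first:
  "ws \<noteq> [] \<Longrightarrow> interleave ((c # hd ws) # tl ws) x = c # interleave ws x"
  by (cases ws; cases "tl ws") auto

lemma interleave_nil_first:
  "ws \<noteq> [] \<Longrightarrow> interleave ([] # ws) x = x @ interleave ws x"
  by (cases ws) auto

lemma build_ws:
  "length A = length B \<Longrightarrow> (\<forall>i<length A. A!i = B!i \<or> (A!i = a \<and> B!i = b)) \<Longrightarrow>
   \<exists>ws. ws \<noteq> [] \<and> interleave ws [a] = A \<and> interleave ws [b] = B"
proof (induction A arbitrary: B)
  case Nil
  then show ?case by (intro exI[of _ "[[]]"]) auto
next
  case (Cons \<alpha> A)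
  obtain \<beta> B' where B: "B = \<beta> # B'" using Cons.prems by (cases B) auto
  have "\<forall>i<length A. A!i = B'!i \<or> (A!i = a \<and> B'!i = b)"
    using Cons.prems(2) B by (metis Suc_less_eq length_Cons nth_Cons_Suc)
  then obtain ws where ws: "ws \<noteq> []" "interleave ws [a] = A" "interleave ws [b] = B'"
    using Cons.IH[of B'] Cons.prems B by auto
  have h0: "\<alpha> = \<beta> \<or> (\<alpha> = a \<and> \<beta> = b)" using Cons.prems(2) B by force
  show ?case
  proof (cases "\<alpha> = \<beta>")
    case True
    then show ?thesis using ws B interleave_cons_first[OF ws(1)]
      by (intro exI[of _ "(\<alpha> # hd ws) # tl ws"]) auto
  next
    case False
    then show ?thesis using ws B h0 interleave_nil_first[OF ws(1)]
      by (intro exI[of _ "[] # ws"]) auto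
  qed
qed

lemma cp_interleave:
  "ws \<noteq> [] \<Longrightarrow> congruence_preserving (interleave ws)"
  unfolding congruence_preserving_def
proof (intro allI impI)
  fix R :: "'a list \<Rightarrow> 'a list \<Rightarrow> bool" and u v
  assume ne: "ws \<noteq> []" and R: "congruence R" and uv: "R u v"
  have refl: "R w w" for w using R unfolding congruence_def by (meson equivp_reflp)
  have app: "R x y \<Longrightarrow> R x' y' \<Longrightarrow> R (x @ x') (y @ y')" for x y x' y'
    using R unfolding congruence_def by blast
  show "R (interleave ws u) (interleave ws v)"
  proof (induction ws)
    case (Cons w ws)
    then show ?case using app refl uv by (cases ws) auto
  qed (simp add: refl)
qed

lemma main_ind:
  fixes f :: "'a list \<Rightarrow> 'a list" and a b c :: 'a
  assumes cp: "congruence_preserving f" and d: "a \<noteq> b" "a \<noteq> c" "b \<noteq> c"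
    and lt1: "\<And>e. f [e] = interleave ws [e]"
  shows "f x = interleave ws x"
proof (induction x rule: length_induct)
  case (1 x)
  let ?P = "interleave ws"
  have er: "sub p [] (f x) = sub p [] (?P x)" if "p \<in> set x" for p
  proof (rule transfer[OF cp _ sub_idem])
    show "f (sub p [] x) = ?P (sub p [] x)" using 1 length_sub_less[OF that] by blast
  qed
  have lt: "sub r x (f x) = sub r x (?P x)" if "r \<notin> set x" for r
    using transfer[OF cp lt1[of r], of r x x] that by (simp add: sub_id)
  have er0: "sub p [] (f []) = sub p [] (?P [])" for p
    using transfer[OF cp lt1[of p], of p "[]" "[]"] by simp
  show ?case
  proof (cases "x = []")
    case True
    show ?thesis
      by (rule detG[where w="[]", OF d(1) not_sym[OF d(2)] not_sym[OF d(3)]]) (simp_all add: True er0)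
  next
    case ne: False
    consider "a \<in> set x" "b \<in> set x" "c \<in> set x" | "a \<in> set x" "b \<in> set x" "c \<notin> set x"
      | "a \<in> set x" "b \<notin> set x" "c \<in> set x" | "a \<notin> set x" "b \<in> set x" "c \<in> set x"
      | "a \<notin> set x" "b \<notin> set x" | "a \<notin> set x" "c \<notin> set x" | "b \<notin> set x" "c \<notin> set x"
      by blast
    then show ?thesis
    proof cases
      case 1
      show ?thesis
        by (rule detG[where w="[]", OF d(1) not_sym[OF d(2)] not_sym[OF d(3)]]) (simp_all add: er lt 1)
    next
      case 2
      show ?thesis
        by (rule detG[where w=x, OF d(1) not_sym[OF d(2)] not_sym[OF d(3)]]) (simp_all add: er lt 2)
    next
      case 3
      show ?thesis
        by (rule detG[where w=x, OF d(2) not_sym[OF d(1)] d(3)]) (simp_all add: er lt 3)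
    next
      case 4
      show ?thesis
        by (rule detG[where w=x, OF d(3) d(1) d(2)]) (simp_all add: er lt 4)
    next
      case 5
      show ?thesis by (rule detH[OF d(1) ne]) (simp_all add: lt 5)
    next
      case 6
      show ?thesis by (rule detH[OF d(2) ne]) (simp_all add: lt 6)
    next
      case 7
      show ?thesis by (rule detH[OF d(3) ne]) (simp_all add: lt 7)
    qed
  qed
qed

lemma three_elems:
  assumes "CARD('a::finite) \<ge> 3"
  obtains a b c :: "'a::finite" where "a \<noteq> b" "a \<noteq> c" "b \<noteq> c"
proof -
  obtain a :: 'a where True by blast
  have "card (UNIV - {a}) \<ge> 2" using assms by (simp add: card_Diff_singleton)
  then obtain b where b: "b \<in> UNIV - {a}"
    by (metis all_not_in_conv card.empty not_numeral_le_zero)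
  have "card (UNIV - {a} - {b}) \<ge> 1" using assms b by (simp add: card_Diff_singleton)
  then obtain c where "c \<in> UNIV - {a} - {b}"
    by (metis all_not_in_conv card.empty not_one_le_zero)
  then show ?thesis using that b by blast
qed

theorem mainTheorem2:
  fixes f :: "'a::finite list \<Rightarrow> 'a list"
  assumes "CARD('a) \<ge> 3"
  shows "congruence_preserving f \<longleftrightarrow>
    (\<exists>ws :: 'a list list. ws \<noteq> [] \<and> (\<forall>x. f x = interleave ws x))"
proof
  assume cp: "congruence_preserving f"
  obtain a b c :: 'a where d: "a \<noteq> b" "a \<noteq> c" "b \<noteq> c" using three_elems[OF assms] by blast
  let ?A = "f [a]" and ?B = "f [b]" and ?C = "f [c]"
  have m1: "sub b [a] ?A = sub b [a] ?B" using kernel[OF cp, of b "[a]" "[a]" "[b]"] d by simp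
  have m2: "sub c [a] ?A = sub c [a] ?C" using kernel[OF cp, of c "[a]" "[a]" "[c]"] d by simp
  have m3: "sub c [b] ?B = sub c [b] ?C" using kernel[OF cp, of c "[b]" "[b]" "[c]"] d by simp
  have l1: "length ?A = length ?B" using arg_cong[OF m1, of length] by (simp add: sub_single)
  have l2: "length ?A = length ?C" using arg_cong[OF m2, of length] by (simp add: sub_single)
  have pw: "\<forall>i<length ?A. ?A!i = ?B!i \<or> (?A!i = a \<and> ?B!i = b)"
  proof (intro allI impI)
    fix i assume i: "i < length ?A"
    have e1: "(if ?A!i = b then a else ?A!i) = (if ?B!i = b then a else ?B!i)"
      using arg_cong[OF m1, of "\<lambda>l. l!i"] i l1 by (simp add: sub_single)
    have e2: "(if ?A!i = c then a else ?A!i) = (if ?C!i = c then a else ?C!i)"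
      using arg_cong[OF m2, of "\<lambda>l. l!i"] i l2 by (simp add: sub_single)
    have e3: "(if ?B!i = c then b else ?B!i) = (if ?C!i = c then b else ?C!i)"
      using arg_cong[OF m3, of "\<lambda>l. l!i"] i l1 l2 by (simp add: sub_single)
    show "?A!i = ?B!i \<or> (?A!i = a \<and> ?B!i = b)"
      using e1 e2 e3 d by (auto split: if_splits)
  qed
  obtain ws where ws: "ws \<noteq> []" "interleave ws [a] = ?A" "interleave ws [b] = ?B"
    using build_ws[OF l1 pw] by blast
  have lt1: "f [e] = interleave ws [e]" for e
  proof (cases "e = a \<or> e = b")
    case True
    then show ?thesis using ws by auto
  next
    case False
    have t1: "sub a [e] (f [e]) = sub a [e] (interleave ws [e])"
      using transfer[OF cp ws(2)[symmetric], of a "[e]" "[e]"] False by simp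
    have t2: "sub b [e] (f [e]) = sub b [e] (interleave ws [e])"
      using transfer[OF cp ws(3)[symmetric], of b "[e]" "[e]"] False by simp
    show ?thesis by (rule detH[OF d(1), of "[e]"]) (use False t1 t2 in auto)
  qed
  show "\<exists>ws. ws \<noteq> [] \<and> (\<forall>x. f x = interleave ws x)"
    using ws(1) main_ind[OF cp d lt1] by blast
next
  assume "\<exists>ws :: 'a list list. ws \<noteq> [] \<and> (\<forall>x. f x = interleave ws x)"
  then obtain ws where "ws \<noteq> []" "f = interleave ws" by blast
  then show "congruence_preserving f" using cp_interleave by blast
qed

end
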